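(* Let $\varphi_t(\theta)=\theta+t\omega\pmod 1$ on $\mathbb{T}^d$ with $\omega\in\mathcal{D}_{c,\tau}$, and let $g(s)=2\sin^2(\pi s)$ on $[0,1]$. If $h\in C^l(\mathbb{T}^d,\mathbb{R})$ with $l>d+2\tau$, then there is a constant $C>0$ such that for all $\theta\in\mathbb{T}^d$ and all $T>0$, \[ \left|\frac1T\int_0^T g\!\left(\tfrac tT\right)h(\theta+t\omega)\,dt-\int_{\mathbb{T}^d}h\,d\theta\right|\le C\,T^{-2}. \]
   Context: A vector $\omega\in\mathbb{R}^d$ is Diophantine, $\omega\in\mathcal{D}_{c,\tau}$ (with $c>0$, $\tau\ge d-1$), if $|k\cdot\omega|>c\|k\|^{-\tau}$ for all $k\in\mathbb{Z}^d\setminus\{0\}$. $d\theta$ denotes normalized Lebesgue measure on $\mathbb{T}^d=\mathbb{R}^d/\mathbb{Z}^d$. *)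

theory Defs
  imports "HOL-Analysis.Analysis"
begin

fun Ck :: "nat \<Rightarrow> ('a::euclidean_space \<Rightarrow> real) \<Rightarrow> bool" where
  "Ck 0 f = continuous_on UNIV f"
| "Ck (Suc n) f = (\<exists>f'. (\<forall>x. (f has_derivative f' x) (at x)) \<and> (\<forall>v. Ck n (\<lambda>x. f' x v)))"

definition int_vec :: "real^'d \<Rightarrow> bool" where
  "int_vec k \<longleftrightarrow> (\<forall>i. k $ i \<in> \<int>)"

definition diophantine :: "real \<Rightarrow> real \<Rightarrow> real^'d \<Rightarrow> bool" where
  "diophantine c \<tau> \<omega> \<longleftrightarrow> c > 0 \<and> \<tau> \<ge> real CARD('d) - 1 \<and>
     (\<forall>k::real^'d. int_vec k \<and> k \<noteq> 0 \<longrightarrow> \<bar>k \<bullet> \<omega>\<bar> > c * norm k powr (-\<tau>))"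

text \<open>Z^d-periodic functions = functions on the torus.\<close>
definition torus_periodic :: "(real^'d \<Rightarrow> real) \<Rightarrow> bool" where
  "torus_periodic h \<longleftrightarrow> (\<forall>x k. int_vec k \<longrightarrow> h (x + k) = h x)"

definition gw :: "real \<Rightarrow> real" where
  "gw s = 2 * (sin (pi * s))^2"

end

theory Submission
  imports Defs
begin


lemma int_vec_add[intro]: "int_vec a \<Longrightarrow> int_vec b \<Longrightarrow> int_vec (a + b)"
  by (auto simp: int_vec_def)
lemma int_vec_minus[intro]: "int_vec a \<Longrightarrow> int_vec (- a)"
  by (auto simp: int_vec_def)
lemma int_vec_diff[intro]: "int_vec a \<Longrightarrow> int_vec b \<Longrightarrow> int_vec (a - b)"
  by (auto simp: int_vec_def)
lemma int_vec_0[simp, intro]: "int_vec 0"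
  by (auto simp: int_vec_def)
lemma int_vec_axis[intro]: "n \<in> \<int> \<Longrightarrow> int_vec (axis j n)"
  by (auto simp: int_vec_def axis_def)
lemma int_vec_scaleR[intro]: "n \<in> \<int> \<Longrightarrow> int_vec a \<Longrightarrow> int_vec (n *\<^sub>R a)"
  by (auto simp: int_vec_def)
lemma int_vec_inner: "int_vec a \<Longrightarrow> int_vec b \<Longrightarrow> a \<bullet> b \<in> \<int>"
  unfolding inner_vec_def int_vec_def by (auto intro!: Ints_sum Ints_mult simp: real_inner_1_right)

lemma One_nth[simp]: "(One::real^'d) $ i = 1"
  by (simp add: cart_eq_inner_axis)

lemma sum_Basis_nth[simp]: "(\<Sum>x\<in>(Basis::(real^'d) set). x $ i) = 1"
proof -
  have "(One::real^'d) $ i = 1" by (simp add: cart_eq_inner_axis)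
  then show ?thesis by (simp add: sum_component)
qed

lemma box_cut_ge: "cbox a b \<inter> {x. x \<bullet> axis j 1 \<ge> c} = cbox (\<chi> i. if i = j then max (a$j) c else a$i) (b::real^'d)"
proof (rule set_eqI)
  fix x :: "real^'d"
  have "(\<forall>i. a$i \<le> x$i \<and> x$i \<le> b$i) \<and> c \<le> x$j \<longleftrightarrow> (\<forall>i. (if i = j then max (a$j) c else a$i) \<le> x$i \<and> x$i \<le> b$i)"
  proof safe
    fix i assume "\<forall>i. (if i = j then max (a$j) c else a$i) \<le> x$i \<and> x$i \<le> b$i"
    then have "\<And>i. (if i = j then max (a$j) c else a$i) \<le> x$i \<and> x$i \<le> b$i" by blast
    from this[of i] this[of j] show "a$i \<le> x$i" "x$i \<le> b$i" "c \<le> x$j" by (auto split: if_splits)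
  qed (auto split: if_splits)
  then show "x \<in> cbox a b \<inter> {x. x \<bullet> axis j 1 \<ge> c} \<longleftrightarrow> x \<in> cbox (\<chi> i. if i = j then max (a$j) c else a$i) b"
    unfolding mem_box_cart Int_iff mem_Collect_eq inner_axis by simp
qed
lemma box_cut_le: "cbox a b \<inter> {x. x \<bullet> axis j 1 \<le> c} = cbox a (\<chi> i. if i = j then min (b$j) c else (b::real^'d)$i)"
proof (rule set_eqI)
  fix x :: "real^'d"
  have "(\<forall>i. a$i \<le> x$i \<and> x$i \<le> b$i) \<and> x$j \<le> c \<longleftrightarrow> (\<forall>i. a$i \<le> x$i \<and> x$i \<le> (if i = j then min (b$j) c else b$i))"
  proof safe
    fix i assume "\<forall>i. a$i \<le> x$i \<and> x$i \<le> (if i = j then min (b$j) c else b$i)"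
    then have "\<And>i. a$i \<le> x$i \<and> x$i \<le> (if i = j then min (b$j) c else b$i)" by blast
    from this[of i] this[of j] show "a$i \<le> x$i" "x$i \<le> b$i" "x$j \<le> c" by (auto split: if_splits)
  qed (auto split: if_splits)
  then show "x \<in> cbox a b \<inter> {x. x \<bullet> axis j 1 \<le> c} \<longleftrightarrow> x \<in> cbox a (\<chi> i. if i = j then min (b$j) c else b$i)"
    unfolding mem_box_cart Int_iff mem_Collect_eq inner_axis by simp
qed

definition fl :: "real^'d \<Rightarrow> real^'d" where "fl x = (\<chi> i. of_int \<lfloor>x$i\<rfloor>)"
lemma int_vec_fl: "int_vec (fl x)" by (auto simp: fl_def int_vec_def)
lemma fl_cube: "x - fl x \<in> cbox 0 One"
  by (auto simp: fl_def mem_box_cart) linarith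

lemma periodic_cube:
  assumes "\<And>x k. int_vec k \<Longrightarrow> f (x + k) = f x"
  shows "f x = f (x - fl x)"
  using assms[of "- fl x" x] int_vec_fl by (metis int_vec_minus diff_conv_add_uminus)

context
  fixes f :: "real^'d \<Rightarrow> complex"
  assumes cf: "continuous_on UNIV f" and pf: "\<And>x k. int_vec k \<Longrightarrow> f (x + k) = f x"
begin

definition "GG a = integral (cbox a (a + One)) f"

lemma GG_int: "int_vec m \<Longrightarrow> GG (a + m) = GG a"
proof -
  assume m: "int_vec m"
  have "GG (a + m) = integral (cbox (a + m) (a + m + One)) f" by (simp add: GG_def)
  also have "\<dots> = integral (cbox (a + m - m) (a + m + One - m)) (\<lambda>x. f (x + m))"
    by (rule integral_shift_cbox[symmetric])
  also have "\<dots> = GG a" using pf[OF m] by (simp add: GG_def algebra_simps)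
  finally show ?thesis .
qed

lemma GG_step: assumes s: "0 \<le> s" "s \<le> 1" shows "GG (a + s *\<^sub>R axis j 1) = GG a"
proof -
  define e :: "real^'d" where "e = axis j 1"
  have eB: "e \<in> Basis" by (simp add: e_def)
  define c0 where "c0 = a$j + s"
  define P1 where "P1 = cbox a (\<chi> i. if i = j then a$j + s else a$i + 1)"
  define P2 where "P2 = cbox (\<chi> i. if i = j then a$j + s else a$i) (a + One)"
  define P3 where "P3 = cbox (\<chi> i. if i = j then a$j + 1 else a$i) (\<chi> i. if i = j then a$j + s + 1 else a$i + 1)"
  have int: "f integrable_on cbox u v" for u v
    by (rule integrable_continuous, rule continuous_on_subset[OF cf]) auto
  have "GG a = integral (cbox a (a + One) \<inter> {x. x \<bullet> e \<le> c0}) f + integral (cbox a (a + One) \<inter> {x. x \<bullet> e \<ge> c0}) f"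
    unfolding GG_def by (rule integral_split[OF int eB])
  also have "cbox a (a + One) \<inter> {x. x \<bullet> e \<le> c0} = P1"
    unfolding e_def box_cut_le P1_def by (rule arg_cong2[where f=cbox]) (use s in \<open>auto simp: vec_eq_iff c0_def\<close>)
  also have "cbox a (a + One) \<inter> {x. x \<bullet> e \<ge> c0} = P2"
    unfolding e_def box_cut_ge P2_def by (rule arg_cong2[where f=cbox]) (use s in \<open>auto simp: vec_eq_iff c0_def\<close>)
  finally have 1: "GG a = integral P1 f + integral P2 f" .
  have "GG (a + s *\<^sub>R e) = integral (cbox (a + s *\<^sub>R e) (a + s *\<^sub>R e + One) \<inter> {x. x \<bullet> e \<le> a$j + 1}) f
     + integral (cbox (a + s *\<^sub>R e) (a + s *\<^sub>R e + One) \<inter> {x. x \<bullet> e \<ge> a$j + 1}) f"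
    unfolding GG_def by (rule integral_split[OF int eB])
  also have "cbox (a + s *\<^sub>R e) (a + s *\<^sub>R e + One) \<inter> {x. x \<bullet> e \<le> a$j + 1} = P2"
    unfolding e_def box_cut_le P2_def by (rule arg_cong2[where f=cbox]) (use s in \<open>auto simp: vec_eq_iff axis_def\<close>)
  also have "cbox (a + s *\<^sub>R e) (a + s *\<^sub>R e + One) \<inter> {x. x \<bullet> e \<ge> a$j + 1} = P3"
    unfolding e_def box_cut_ge P3_def by (rule arg_cong2[where f=cbox]) (use s in \<open>auto simp: vec_eq_iff axis_def\<close>)
  finally have 2: "GG (a + s *\<^sub>R e) = integral P2 f + integral P3 f" .
  have "integral P3 f = integral (cbox ((\<chi> i. if i = j then a$j + 1 else a$i) - e) ((\<chi> i. if i = j then a$j + s + 1 else a$i + 1) - e)) (\<lambda>x. f (x + e))"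
    unfolding P3_def by (rule integral_shift_cbox[symmetric])
  also have "\<dots> = integral P1 f"
  proof -
    have b1: "(\<chi> i. if i = j then a$j + 1 else a$i) - e = a" and
      b2: "(\<chi> i. if i = j then a$j + s + 1 else a$i + 1) - e = (\<chi> i. if i = j then a$j + s else a$i + 1)"
      by (auto simp: vec_eq_iff e_def axis_def)
    have "(\<lambda>x. f (x + e)) = f" using pf[of e] by (auto simp: e_def int_vec_axis)
    then show ?thesis unfolding b1 b2 P1_def by simp
  qed
  finally show ?thesis using 1 2 by (simp add: e_def)
qed

lemma GG_dir: "GG (a + s *\<^sub>R axis j 1) = GG a"
proof -
  define r where "r = s - of_int \<lfloor>s\<rfloor>"
  have r: "0 \<le> r" "r \<le> 1" unfolding r_def by linarith+
  have "a + s *\<^sub>R axis j 1 = (a + r *\<^sub>R axis j 1) + axis j (of_int \<lfloor>s\<rfloor>)"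
    by (simp add: r_def vec_eq_iff axis_def algebra_simps)
  then have "GG (a + s *\<^sub>R axis j 1) = GG (a + r *\<^sub>R axis j 1)"
    using GG_int[of "axis j (of_int \<lfloor>s\<rfloor>)" "a + r *\<^sub>R axis j 1"] int_vec_axis[of "of_int \<lfloor>s\<rfloor>" j]
    by (simp add: add.assoc)
  also have "\<dots> = GG a" by (rule GG_step[OF r])
  finally show ?thesis .
qed

lemma GG_sum: "finite S \<Longrightarrow> GG (a + (\<Sum>j\<in>S. v j *\<^sub>R axis j 1)) = GG a"
proof (induction S rule: finite_induct)
  case (insert x F)
  have "GG (a + (\<Sum>j\<in>insert x F. v j *\<^sub>R axis j 1)) = GG ((a + (\<Sum>j\<in>F. v j *\<^sub>R axis j 1)) + v x *\<^sub>R axis x 1)"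
    using insert by (simp add: algebra_simps)
  also have "\<dots> = GG a" using GG_dir insert by simp
  finally show ?case .
qed simp

lemma GG_const: "GG a = GG 0"
proof -
  have "a = 0 + (\<Sum>j\<in>UNIV. (a$j) *\<^sub>R axis j 1)"
    using basis_expansion[of a] by (simp add: scalar_mult_eq_scaleR)
  then show ?thesis using GG_sum[of UNIV 0 "\<lambda>j. a$j"] by simp
qed

lemma translation_invariant: "integral (cbox 0 One) (\<lambda>x. f (x + a)) = integral (cbox 0 One) f"
proof -
  have "integral (cbox 0 One) (\<lambda>x. f (x + a)) = integral (cbox (a - a) (a + One - a)) (\<lambda>x. f (x + a))" by simp
  also have "\<dots> = GG a" unfolding GG_def by (rule integral_shift_cbox)
  also have "\<dots> = GG 0" by (rule GG_const)
  finally show ?thesis by (simp add: GG_def)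
qed

end



definition chi :: "real^'d \<Rightarrow> real^'d \<Rightarrow> complex" where
  "chi k x = cis (2 * pi * (k \<bullet> x))"

lemma chi_add: "chi k (x + y) = chi k x * chi k y"
  by (simp add: chi_def cis_mult inner_add_right algebra_simps)
lemma chi_mult: "chi k x * chi m x = chi (k + m) x"
  by (simp add: chi_def cis_mult inner_add_left algebra_simps)
lemma chi_cnj: "cnj (chi k x) = chi (- k) x"
  by (simp add: chi_def cis_cnj)
lemma norm_chi[simp]: "norm (chi k x) = 1"
  by (simp add: chi_def)
lemma chi_zero[simp]: "chi 0 x = 1"
  by (simp add: chi_def)
lemma chi_neg_mult: "chi (- k) x * chi k x = 1"
  by (simp add: chi_mult)
lemma chi_int_period: "int_vec k \<Longrightarrow> int_vec m \<Longrightarrow> chi k (x + m) = chi k x"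
  using int_vec_inner[of k m] by (simp add: chi_add) (simp add: chi_def)
lemma continuous_on_chi[continuous_intros]: "continuous_on S (chi k)"
  unfolding chi_def by (intro continuous_intros)

lemma integral_of_real_c:
  assumes "f integrable_on S"
  shows "integral S (\<lambda>x. complex_of_real (f x)) = complex_of_real (integral S f)"
  using has_integral_of_real[OF integrable_integral[OF assms]] by (rule integral_unique)

lemma chi_orth:
  fixes k :: "real^'d"
  assumes k: "int_vec k"
  shows "integral (cbox 0 One) (chi k) = (if k = 0 then 1 else 0)"
proof (cases "k = 0")
  case True
  have "chi 0 = (\<lambda>x::real^'d. 1)" by (rule ext) simp
  then have "integral (cbox 0 One) (chi (0::real^'d)) = integral (cbox 0 One) (\<lambda>x::real^'d. 1::complex)"
    by metis
  then show ?thesis using True by simp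
next
  case False
  then obtain j where j: "k $ j \<noteq> 0" by (auto simp: vec_eq_iff)
  define a :: "real^'d" where "a = axis j (1 / (2 * k$j))"
  have ka: "k \<bullet> a = 1/2" using j by (simp add: a_def inner_axis)
  have chia: "chi k a = -1" by (simp add: chi_def ka)
  have "integral (cbox 0 One) (\<lambda>x. chi k (x + a)) = integral (cbox 0 One) (chi k)"
    by (rule translation_invariant) (auto intro: continuous_intros chi_int_period[OF k])
  then have "- integral (cbox 0 One) (chi k) = integral (cbox 0 One) (chi k)"
    by (simp add: chi_add chia)
  then show ?thesis using False by simp
qed

definition fco :: "(real^'d \<Rightarrow> complex) \<Rightarrow> real^'d \<Rightarrow> complex" where
  "fco F k = integral (cbox 0 One) (\<lambda>x. F x * chi (- k) x)"

lemma fco_shift: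
  assumes cF: "continuous_on UNIV F" and pF: "\<And>x m. int_vec m \<Longrightarrow> F (x + m) = F x"
    and k: "int_vec k"
  shows "fco (\<lambda>x. F (x + w)) k = chi k w * fco F k"
proof -
  have "integral (cbox 0 One) (\<lambda>x. F (x + w) * chi (- k) (x + w)) = fco F k"
    unfolding fco_def
    by (rule translation_invariant) (auto intro!: continuous_intros cF[THEN continuous_on_subset] simp: pF chi_int_period k int_vec_minus)
  then have "integral (cbox 0 One) (\<lambda>x. F (x + w) * chi (- k) x) * chi (-k) w = fco F k"
  proof -
    have "(\<lambda>x. F (x + w) * chi (- k) (x + w)) = (\<lambda>x. (F (x + w) * chi (- k) x) * chi (-k) w)"
      by (auto simp: chi_add)
    then show "integral (cbox 0 One) (\<lambda>x. F (x + w) * chi (- k) (x + w)) = fco F k \<Longrightarrow> ?thesis" by simp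
  qed
  then have E: "chi (-k) w * integral (cbox 0 One) (\<lambda>x. F (x + w) * chi (- k) x) = fco F k"
    by (simp add: mult.commute)
  have "chi k w * fco F k = (chi k w * chi (-k) w) * integral (cbox 0 One) (\<lambda>x. F (x + w) * chi (- k) x)"
    by (simp add: E[symmetric] mult.assoc)
  also have "chi k w * chi (-k) w = 1" by (simp add: chi_mult)
  finally show ?thesis by (simp add: fco_def)
qed



definition per :: "(real^'d \<Rightarrow> 'b) \<Rightarrow> bool" where
  "per f \<longleftrightarrow> (\<forall>x k. int_vec k \<longrightarrow> f (x + k) = f x)"

fun Dn :: "nat \<Rightarrow> real^'d \<Rightarrow> (real^'d \<Rightarrow> real) \<Rightarrow> real^'d \<Rightarrow> real" where
  "Dn 0 w f = f"
| "Dn (Suc n) w f = (\<lambda>x. Dn n w f (x + w) - Dn n w f x)"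

lemma Dn_cmult: "Dn n w (\<lambda>y. c * g y) x = c * Dn n w g x"
  by (induction n arbitrary: x) (auto simp: algebra_simps)

lemma Dn_deriv:
  assumes "\<And>x. (f has_derivative f' x) (at x)"
  shows "(Dn n w f has_derivative (\<lambda>u. Dn n w (\<lambda>y. f' y u) x)) (at x)"
proof (induction n arbitrary: x)
  case 0 show ?case using assms by simp
next
  case (Suc n)
  have 1: "((\<lambda>y. Dn n w f (y + w)) has_derivative (\<lambda>u. Dn n w (\<lambda>y. f' y u) (x + w))) (at x)"
    using has_derivative_compose[OF has_derivative_add_const[OF has_derivative_ident] Suc.IH[of "x+w"]] by simp
  show ?case using has_derivative_diff[OF 1 Suc.IH[of x]] by simp
qed

lemma Dn_per: "per f \<Longrightarrow> per (Dn n w f)"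
proof (induction n)
  case (Suc n)
  then have "Dn n w f (x + k + w) = Dn n w f (x + w)" "Dn n w f (x + k) = Dn n w f x" if "int_vec k" for x k
    using that unfolding per_def by (metis add.commute add.left_commute)+
  then show ?case by (auto simp: per_def)
qed simp

lemma Dn_cont: "continuous_on UNIV f \<Longrightarrow> continuous_on UNIV (Dn n w f)"
proof (induction n)
  case (Suc n)
  have "continuous_on UNIV (\<lambda>x. Dn n w f (x + w))"
    by (rule continuous_on_compose2[OF Suc.IH[OF Suc.prems]]) (auto intro: continuous_intros)
  then show ?case using Suc by (auto intro!: continuous_intros)
qed simp

lemma Ck_cont: "Ck n f \<Longrightarrow> continuous_on UNIV f"
proof (cases n)
  case (Suc m)
  assume "Ck n f"
  then obtain f' where "\<And>x. (f has_derivative f' x) (at x)" using Suc by auto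
  then show ?thesis by (intro has_derivative_continuous_on) auto
qed simp

lemma per_deriv:
  assumes d: "\<And>x. (f has_derivative f' x) (at x)" and p: "per f" and m: "int_vec m"
  shows "f' (x + m) = f' x"
proof -
  have "((\<lambda>y. f (y + m)) has_derivative (\<lambda>u. f' (x + m) u)) (at x)"
    using has_derivative_compose[OF has_derivative_add_const[OF has_derivative_ident] d[of "x+m"]] by simp
  moreover have "(\<lambda>y. f (y + m)) = f" using p m by (auto simp: per_def)
  ultimately have "(f has_derivative f' (x + m)) (at x)" by simp
  then show ?thesis using has_derivative_unique d by blast
qed

lemma cont_per_bounded:
  fixes f :: "real^'d \<Rightarrow> real"
  assumes c: "continuous_on UNIV f" and p: "per f"
  shows "\<exists>M. \<forall>x. \<bar>f x\<bar> \<le> M"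
proof -
  have "compact (f ` cbox 0 One)"
    by (rule compact_continuous_image[OF continuous_on_subset[OF c]]) auto
  then obtain M where M: "\<And>y. y \<in> f ` cbox 0 One \<Longrightarrow> norm y \<le> M"
    using compact_imp_bounded bounded_iff by metis
  have "\<bar>f x\<bar> \<le> M" for x
  proof -
    have "f x = f (x - fl x)" using p by (intro periodic_cube) (auto simp: per_def)
    then show ?thesis using M[of "f x"] fl_cube[of x] by auto
  qed
  then show ?thesis by blast
qed

lemma Dn_bound:
  assumes "Ck n f" "per f"
  shows "\<exists>M. \<forall>s x. \<bar>Dn n (s *\<^sub>R v) f x\<bar> \<le> M * \<bar>s\<bar> ^ n"
  using assms
proof (induction n arbitrary: f)
  case 0
  then show ?case using cont_per_bounded[OF Ck_cont[OF "0.prems"(1)] "0.prems"(2)] by simp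
next
  case (Suc n)
  obtain f' where d: "\<And>x. (f has_derivative f' x) (at x)" and c: "\<And>u. Ck n (\<lambda>x. f' x u)"
    using Suc.prems(1) by auto
  define g where "g = (\<lambda>x. f' x v)"
  have pg: "per g" unfolding g_def per_def using per_deriv[OF d Suc.prems(2)] by auto
  obtain M where M: "\<And>s x. \<bar>Dn n (s *\<^sub>R v) g x\<bar> \<le> M * \<bar>s\<bar> ^ n"
    using Suc.IH[OF c[of v, folded g_def] pg] by blast
  have "\<bar>Dn (Suc n) (s *\<^sub>R v) f x\<bar> \<le> M * \<bar>s\<bar> ^ Suc n" for s x
  proof -
    define w where "w = s *\<^sub>R v"
    define \<phi> where "\<phi> t = Dn n w f (x + t *\<^sub>R w)" for t
    have lin: "f' y (h *\<^sub>R w) = h * (s * g y)" for y h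
    proof -
      interpret bounded_linear "f' y" using d by (rule has_derivative_bounded_linear)
      show ?thesis by (simp add: w_def scaleR g_def)
    qed
    have der: "DERIV \<phi> t :> s * Dn n w g (x + t *\<^sub>R w)" for t
    proof -
      have "(\<phi> has_derivative (\<lambda>h. Dn n w (\<lambda>y. f' y (h *\<^sub>R w)) (x + t *\<^sub>R w))) (at t)"
        unfolding \<phi>_def
        by (rule has_derivative_compose[OF _ Dn_deriv[OF d]]) (auto intro!: derivative_eq_intros)
      also have "(\<lambda>h. Dn n w (\<lambda>y. f' y (h *\<^sub>R w)) (x + t *\<^sub>R w)) = (\<lambda>h. (s * Dn n w g (x + t *\<^sub>R w)) * h)"
        by (rule ext) (simp add: lin Dn_cmult[of n w "h * s" g for h, unfolded mult.assoc])
      finally show ?thesis by (simp add: has_field_derivative_def mult_commute_abs)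
    qed
    obtain z where "\<phi> 1 - \<phi> 0 = (1 - 0) * (s * Dn n w g (x + z *\<^sub>R w))"
      using MVT2[of 0 1 \<phi>, OF _ der] by auto
    then have "Dn (Suc n) w f x = s * Dn n w g (x + z *\<^sub>R w)" by (simp add: \<phi>_def)
    then have "\<bar>Dn (Suc n) w f x\<bar> = \<bar>s\<bar> * \<bar>Dn n w g (x + z *\<^sub>R w)\<bar>" by (simp add: abs_mult)
    also have "\<dots> \<le> \<bar>s\<bar> * (M * \<bar>s\<bar> ^ n)" using M[of s] by (simp add: w_def mult_left_mono)
    finally show ?thesis by (simp add: w_def algebra_simps)
  qed
  then show ?case by blast
qed

lemma per_ofreal: "per f \<Longrightarrow> per (\<lambda>x. complex_of_real (f x))"
  by (auto simp: per_def)

lemma fco_Dn: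
  fixes k :: "real^'d"
  assumes c: "continuous_on UNIV f" and p: "per f" and k: "int_vec k"
  shows "fco (\<lambda>x. of_real (Dn n w f x)) k = (chi k w - 1) ^ n * fco (\<lambda>x. of_real (f x)) k"
proof (induction n)
  case (Suc n)
  have cD: "continuous_on UNIV (\<lambda>x. complex_of_real (Dn n w f x))"
    by (intro continuous_intros Dn_cont[OF c])
  have pD: "\<And>x m. int_vec m \<Longrightarrow> complex_of_real (Dn n w f (x + m)) = complex_of_real (Dn n w f x)"
    using Dn_per[OF p] by (auto simp: per_def)
  have int: "(\<lambda>x. G x * chi (-k) x) integrable_on cbox 0 One" if "continuous_on UNIV G" for G :: "real^'d \<Rightarrow> complex"
    by (rule integrable_continuous, intro continuous_intros continuous_on_subset[OF that]) auto
  have cD': "continuous_on UNIV (\<lambda>x. complex_of_real (Dn n w f (x + w)))"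
    by (rule continuous_on_compose2[OF cD]) (auto intro: continuous_intros)
  have "fco (\<lambda>x. of_real (Dn (Suc n) w f x)) k =
     fco (\<lambda>x. of_real (Dn n w f (x + w))) k - fco (\<lambda>x. of_real (Dn n w f x)) k"
    unfolding fco_def using int[OF cD] int[OF cD']
    by (simp add: left_diff_distrib integral_diff[symmetric])
  also have "\<dots> = (chi k w - 1) * fco (\<lambda>x. of_real (Dn n w f x)) k"
    using fco_shift[OF cD pD k, of w] by (simp add: algebra_simps)
  finally show ?case using Suc by simp
qed simp

lemma fco_bound:
  fixes g :: "real^'d \<Rightarrow> complex"
  assumes c: "continuous_on UNIV g" and B: "\<And>x. norm (g x) \<le> B"
  shows "norm (fco g k) \<le> B"
proof -
  have "(\<lambda>x. g x * chi (-k) x) integrable_on cbox 0 One"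
    by (rule integrable_continuous, intro continuous_intros continuous_on_subset[OF c]) auto
  moreover have "0 \<le> B" using order_trans[OF norm_ge_zero B] .
  ultimately show ?thesis
    using has_integral_bound[OF _ integrable_integral, of B "\<lambda>x. g x * chi (-k) x" 0 "One::real^'d"] B
    unfolding fco_def by (auto simp: norm_mult)
qed



lemma decay:
  fixes h :: "real^'d \<Rightarrow> real"
  assumes Ck: "Ck l h" and p: "per h"
  shows "\<exists>M\<ge>0. \<forall>k. int_vec k \<and> k \<noteq> 0 \<longrightarrow> norm (fco (\<lambda>x. of_real (h x)) k) \<le> M * norm k powr (- real l)"
proof -
  have "\<forall>j. \<exists>M. \<forall>s x. \<bar>Dn l (s *\<^sub>R axis j 1) h x\<bar> \<le> M * \<bar>s\<bar> ^ l"
    using Dn_bound[OF Ck p] by blast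
  then obtain Mj where Mj: "\<And>j s x. \<bar>Dn l (s *\<^sub>R axis j 1) h x\<bar> \<le> Mj j * \<bar>s\<bar> ^ l" by metis
  define c where "c = real CARD('d)"
  have c1: "1 \<le> c" unfolding c_def by (simp add: Suc_le_eq)
  define M where "M = c ^ l * (\<Sum>j\<in>UNIV. \<bar>Mj j\<bar>)"
  have cont: "continuous_on UNIV h" by (rule Ck_cont[OF Ck])
  have "norm (fco (\<lambda>x. of_real (h x)) k) \<le> M * norm k powr (- real l)" if k: "int_vec k" "k \<noteq> 0" for k :: "real^'d"
  proof -
    have "Max (range (\<lambda>i. \<bar>k$i\<bar>)) \<in> range (\<lambda>i. \<bar>k$i\<bar>)" by (rule Max_in) auto
    then obtain j where jmax: "\<bar>k$j\<bar> = Max (range (\<lambda>i. \<bar>k$i\<bar>))" by (metis rangeE)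
    have jm: "\<bar>k$i\<bar> \<le> \<bar>k$j\<bar>" for i unfolding jmax by (rule Max_ge) auto
    have "k $ j \<noteq> 0"
    proof
      assume "k $ j = 0"
      then have "k $ i = 0" for i using jm[of i] by simp
      then show False using k by (auto simp: vec_eq_iff)
    qed
    moreover have "k $ j \<in> \<int>" using k by (auto simp: int_vec_def)
    ultimately have a1: "1 \<le> \<bar>k$j\<bar>" by (rule Ints_nonzero_abs_ge1[rotated])
    define a where "a = \<bar>k$j\<bar>"
    have a1': "1 \<le> a" using a1 by (simp add: a_def)
    define N where "N = norm k"
    have Npos: "0 < N" using k by (simp add: N_def)
    have Nle: "N \<le> c * a"
    proof -
      have "N \<le> (\<Sum>i\<in>UNIV. \<bar>k$i\<bar>)" unfolding N_def by (rule norm_le_l1_cart)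
      also have "\<dots> \<le> of_nat (card (UNIV::'d set)) * a" by (rule sum_bounded_above) (use jm in \<open>auto simp: a_def\<close>)
      finally show ?thesis by (simp add: c_def)
    qed
    define s where "s = 1 / (2 * k$j)"
    define w where "w = s *\<^sub>R axis j (1::real)"
    have kw: "k \<bullet> w = 1/2" using \<open>k$j \<noteq> 0\<close> by (simp add: w_def s_def inner_axis)
    have chikw: "chi k w - 1 = -2" by (simp add: chi_def kw)
    define F where "F = fco (\<lambda>x. of_real (h x)) k"
    have E: "fco (\<lambda>x. of_real (Dn l w h x)) k = (-2) ^ l * F"
      unfolding F_def using fco_Dn[OF cont p k(1), where n=l and w=w] by (simp add: chikw)
    have B: "norm (fco (\<lambda>x. of_real (Dn l w h x)) k) \<le> \<bar>Mj j\<bar> * \<bar>s\<bar> ^ l"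
    proof (rule fco_bound)
      show "continuous_on UNIV (\<lambda>x. complex_of_real (Dn l w h x))"
        by (intro continuous_intros Dn_cont[OF cont])
      show "norm (complex_of_real (Dn l w h x)) \<le> \<bar>Mj j\<bar> * \<bar>s\<bar> ^ l" for x
        using Mj[where j=j and s=s and x=x] by (simp add: w_def) (meson abs_ge_self mult_right_mono order_trans zero_le_power abs_ge_zero)
    qed
    have sa: "\<bar>s\<bar> ^ l = 1 / (2 ^ l * a ^ l)" by (simp add: s_def a_def abs_mult power_divide power_mult_distrib)
    have "2 ^ l * norm F \<le> \<bar>Mj j\<bar> / (2 ^ l * a ^ l)"
      using B E sa by (simp add: norm_mult norm_power)
    then have "norm F * 2 ^ l \<le> \<bar>Mj j\<bar> / (2 ^ l * a ^ l)" by (simp add: mult.commute)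
    then have "norm F \<le> (\<bar>Mj j\<bar> / (2 ^ l * a ^ l)) / 2 ^ l"
      by (subst pos_le_divide_eq) auto
    also have "\<dots> = \<bar>Mj j\<bar> / (4 ^ l * a ^ l)"
    proof -
      have "(4::real) ^ l = 2 ^ l * 2 ^ l" by (simp add: power_mult_distrib[symmetric])
      then show ?thesis by (simp add: divide_divide_eq_left mult.commute mult.left_commute)
    qed
    also have "\<dots> \<le> \<bar>Mj j\<bar> / a ^ l"
      using a1' by (intro divide_left_mono) (auto simp: one_le_power)
    also have "\<dots> = c ^ l * \<bar>Mj j\<bar> / (c * a) ^ l"
      using c1 by (simp add: power_mult_distrib)
    also have "\<dots> \<le> c ^ l * \<bar>Mj j\<bar> / N ^ l"
      using Npos Nle c1 by (intro divide_left_mono power_mono) auto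
    also have "\<dots> \<le> M * N powr (- real l)"
    proof -
      have "\<bar>Mj j\<bar> \<le> (\<Sum>j\<in>UNIV. \<bar>Mj j\<bar>)" by (rule member_le_sum) auto
      then have "c ^ l * \<bar>Mj j\<bar> \<le> M" unfolding M_def using c1 by (intro mult_left_mono) auto
      then show ?thesis using Npos
        by (simp add: powr_minus powr_realpow divide_inverse mult_right_mono)
    qed
    finally show ?thesis by (simp add: F_def N_def)
  qed
  moreover have "M \<ge> 0" unfolding M_def using c1 by (auto intro!: sum_nonneg)
  ultimately show ?thesis by blast
qed



lemma one_d_bound:
  fixes p :: real assumes p: "p > 1"
  shows "\<exists>A. \<forall>N::nat. (\<Sum>m\<in>{-int N..int N}. (1 + \<bar>real_of_int m\<bar>) powr (-p)) \<le> A"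
proof -
  define g where "g n = (1 + real n) powr (-p)" for n :: nat
  have sg: "summable g"
  proof -
    have "summable (\<lambda>n. real n powr (-p))" using p by (subst summable_real_powr_iff) auto
    then have "summable (\<lambda>n. real (Suc n) powr (-p))" by (subst summable_Suc_iff)
    then show ?thesis by (simp add: g_def[abs_def] add.commute)
  qed
  have g0: "0 \<le> g n" for n by (simp add: g_def)
  have "(\<Sum>m\<in>{-int N..int N}. (1 + \<bar>real_of_int m\<bar>) powr (-p)) \<le> 2 * suminf g" for N
  proof -
    let ?f = "\<lambda>m::int. (1 + \<bar>real_of_int m\<bar>) powr (-p)"
    define A where "A = int ` {..N}"
    define B where "B = (\<lambda>n. - int n) ` {..N}"
    have sub: "{-int N..int N} \<subseteq> A \<union> B"
    proof
      fix m assume "m \<in> {-int N..int N}"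
      then have m: "-int N \<le> m" "m \<le> int N" by auto
      show "m \<in> A \<union> B"
      proof (cases "m \<ge> 0")
        case True
        then have "m = int (nat m)" "nat m \<in> {..N}" using m by auto
        then show ?thesis unfolding A_def by (metis UnI1 image_eqI)
      next
        case False
        then have "m = - int (nat (-m))" "nat (-m) \<in> {..N}" using m by auto
        then show ?thesis unfolding B_def by (metis UnI2 image_eqI)
      qed
    qed
    have "sum ?f {-int N..int N} \<le> sum ?f (A \<union> B)"
      by (rule sum_mono2) (use sub in \<open>auto simp: A_def B_def\<close>)
    also have "\<dots> \<le> sum ?f A + sum ?f B"
    proof -
      have "finite A" "finite B" by (auto simp: A_def B_def)
      from sum.union_inter[OF this, of ?f] show ?thesis
        using sum_nonneg[of "A \<inter> B" ?f] by auto
    qed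
    also have "sum ?f A = sum g {..N}"
      unfolding A_def by (subst sum.reindex) (auto simp: inj_on_def g_def)
    also have "sum ?f B = sum g {..N}"
      unfolding B_def by (subst sum.reindex) (auto simp: inj_on_def g_def)
    also have "sum g {..N} \<le> suminf g"
      using sum_le_suminf[OF sg, of "{..N}"] g0 by auto
    finally show ?thesis by simp
  qed
  then show ?thesis by blast
qed



lemma int_vec_norm_ge1:
  fixes k :: "real^'d" assumes "int_vec k" "k \<noteq> 0" shows "1 \<le> norm k"
proof -
  obtain j where "k $ j \<noteq> 0" using assms by (auto simp: vec_eq_iff)
  moreover have "k $ j \<in> \<int>" using assms by (auto simp: int_vec_def)
  ultimately have "1 \<le> \<bar>k$j\<bar>" by (rule Ints_nonzero_abs_ge1[rotated])
  then show ?thesis using component_le_norm_cart[of k j] by linarith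
qed

lemma lattice_bound:
  fixes \<sigma> :: real assumes \<sigma>: "\<sigma> > real CARD('d)"
  shows "\<exists>B. \<forall>S::(real^'d) set. finite S \<and> S \<subseteq> {k. int_vec k} \<longrightarrow>
            (\<Sum>k\<in>S. if k = 0 then 0 else norm k powr (-\<sigma>)) \<le> B"
proof -
  define d where "d = real CARD('d)"
  have d1: "1 \<le> d" unfolding d_def by (simp add: Suc_le_eq)
  define p where "p = \<sigma> / d"
  have p1: "p > 1" using \<sigma> d1 by (simp add: p_def d_def)
  define a where "a m = (1 + \<bar>real_of_int m\<bar>) powr (-p)" for m :: int
  obtain A where A: "\<And>N::nat. (\<Sum>m\<in>{-int N..int N}. a m) \<le> A"
    using one_d_bound[OF p1] unfolding a_def by blast
  have a0: "0 \<le> a m" for m by (simp add: a_def)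
  define q where "q k = (\<Prod>i\<in>UNIV. (1 + \<bar>k$i\<bar>) powr (-p))" for k :: "real^'d"
  have q0: "0 \<le> q k" for k unfolding q_def by (intro prod_nonneg) auto
  have pt: "norm k powr (-\<sigma>) \<le> 2 powr \<sigma> * q k" if k: "int_vec k" "k \<noteq> 0" for k :: "real^'d"
  proof -
    define n where "n = norm k"
    have n1: "1 \<le> n" using int_vec_norm_ge1[OF k] by (simp add: n_def)
    define P where "P = (\<Prod>i\<in>UNIV. (1 + \<bar>k$i\<bar>))"
    have Ppos: "0 < P" unfolding P_def by (intro prod_pos) auto
    have qP: "q k = P powr (-p)" unfolding q_def P_def by (simp add: prod_powr_distrib)
    have "P \<le> (\<Prod>i\<in>(UNIV::'d set). (1 + n))"
      unfolding P_def by (intro prod_mono) (auto simp: n_def component_le_norm_cart)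
    also have "\<dots> = (1 + n) ^ CARD('d)" by simp
    also have "\<dots> \<le> (2 * n) ^ CARD('d)" using n1 by (intro power_mono) auto
    finally have Ple: "P \<le> (2 * n) ^ CARD('d)" .
    have "(2 * n) ^ CARD('d) = (2 * n) powr (real CARD('d))"
      by (rule powr_realpow[symmetric]) (use n1 in auto)
    then have "((2 * n) ^ CARD('d)) powr (-p) = (2 * n) powr (d * (-p))"
      by (simp add: powr_powr d_def)
    also have "d * (-p) = -\<sigma>" using d1 by (simp add: p_def)
    finally have "(2 * n) powr (-\<sigma>) = ((2 * n) ^ CARD('d)) powr (-p)" by simp
    also have "\<dots> \<le> P powr (-p)" using p1 Ppos Ple by (intro powr_mono2') auto
    finally have "(2 * n) powr (-\<sigma>) \<le> q k" using qP by simp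
    moreover have "n powr (-\<sigma>) = 2 powr \<sigma> * (2 * n) powr (-\<sigma>)"
      by (simp add: powr_mult powr_minus)
    ultimately show ?thesis by (simp add: n_def)
  qed
  have "(\<Sum>k\<in>S. if k = 0 then 0 else norm k powr (-\<sigma>)) \<le> 2 powr \<sigma> * A ^ CARD('d)"
    if S: "finite S" "S \<subseteq> {k. int_vec k}" for S :: "(real^'d) set"
  proof -
    have "(\<Sum>k\<in>S. if k = 0 then 0 else norm k powr (-\<sigma>)) \<le> (\<Sum>k\<in>S. 2 powr \<sigma> * q k)"
      using S pt q0 by (intro sum_mono) auto
    also have "\<dots> = 2 powr \<sigma> * (\<Sum>k\<in>S. q k)" by (simp add: sum_distrib_left)
    also have "(\<Sum>k\<in>S. q k) \<le> A ^ CARD('d)"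
    proof -
      define \<iota> where "\<iota> k = (\<lambda>i. \<lfloor>k$i\<rfloor>)" for k :: "real^'d"
      have kint: "k $ i = of_int \<lfloor>k$i\<rfloor>" if "k \<in> S" for k i
        using S that by (auto simp: int_vec_def)
      have inj: "inj_on \<iota> S"
      proof
        fix x y assume "x \<in> S" "y \<in> S" "\<iota> x = \<iota> y"
        then show "x = y" using kint by (metis \<iota>_def vec_eq_iff)
      qed
      define N where "N = nat \<lceil>\<Sum>k\<in>S. \<Sum>i\<in>UNIV. \<bar>k$i\<bar>\<rceil>"
      have Nb: "\<bar>k$i\<bar> \<le> real N" if "k \<in> S" for k i
      proof -
        have "\<bar>k$i\<bar> \<le> (\<Sum>i\<in>UNIV. \<bar>k$i\<bar>)" by (rule member_le_sum) auto
        also have "\<dots> \<le> (\<Sum>k\<in>S. \<Sum>i\<in>UNIV. \<bar>k$i\<bar>)"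
          using S that by (intro member_le_sum) (auto intro: sum_nonneg)
        also have "\<dots> \<le> real N" unfolding N_def by linarith
        finally show ?thesis .
      qed
      have qa: "q k = (\<Prod>i\<in>UNIV. a (\<iota> k i))" if "k \<in> S" for k
        unfolding q_def a_def \<iota>_def using kint[OF that] by (metis (no_types, lifting))
      have "(\<Sum>k\<in>S. q k) = (\<Sum>g\<in>\<iota> ` S. \<Prod>i\<in>UNIV. a (g i))"
        by (subst sum.reindex[OF inj]) (auto simp: qa)
      also have "\<dots> \<le> (\<Sum>g\<in>PiE (UNIV::'d set) (\<lambda>_. {-int N..int N}). \<Prod>i\<in>UNIV. a (g i))"
      proof (rule sum_mono2[where f="\<lambda>g. \<Prod>i\<in>UNIV. a (g i)"])
        show "finite (PiE UNIV (\<lambda>_::'d. {-int N..int N}))" by (intro finite_PiE) auto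
        show "\<iota> ` S \<subseteq> PiE (UNIV::'d set) (\<lambda>_. {-int N..int N})"
        proof
          fix g assume "g \<in> \<iota> ` S"
          then obtain k where k: "k \<in> S" "g = \<iota> k" by auto
          have "- int N \<le> \<lfloor>k$i\<rfloor> \<and> \<lfloor>k$i\<rfloor> \<le> int N" for i
            using Nb[OF k(1), of i] kint[OF k(1), of i] by (auto simp: abs_le_iff)
          then show "g \<in> PiE (UNIV::'d set) (\<lambda>_. {-int N..int N})" by (auto simp: k \<iota>_def)
        qed
        show "0 \<le> (\<Prod>i\<in>UNIV. a (g i))" for g by (intro prod_nonneg) (auto simp: a0)
      qed
      also have "\<dots> = (\<Prod>i\<in>(UNIV::'d set). \<Sum>m\<in>{-int N..int N}. a m)"
        by (rule prod_sum_PiE[symmetric]) auto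
      also have "\<dots> \<le> (\<Prod>i\<in>(UNIV::'d set). A)"
        by (intro prod_mono) (auto intro: sum_nonneg a0 A)
      finally show ?thesis by simp
    qed
    then have "2 powr \<sigma> * (\<Sum>k\<in>S. q k) \<le> 2 powr \<sigma> * A ^ CARD('d)" by (intro mult_left_mono) auto
    finally show ?thesis .
  qed
  then show ?thesis by blast
qed



definition tp :: "(real^'d \<Rightarrow> complex) \<Rightarrow> bool" where
  "tp q \<longleftrightarrow> (\<exists>L. (\<forall>p\<in>set L. int_vec (fst p)) \<and> (\<forall>x. q x = (\<Sum>p\<leftarrow>L. snd p * chi (fst p) x)))"

lemma tpI: "(\<forall>p\<in>set L. int_vec (fst p)) \<Longrightarrow> (\<And>x. q x = (\<Sum>p\<leftarrow>L. snd p * chi (fst p) x)) \<Longrightarrow> tp q"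
  unfolding tp_def by blast

lemma tp_const: "tp (\<lambda>x. c)"
  by (rule tpI[of "[(0, c)]"]) auto

lemma tp_add: "tp f \<Longrightarrow> tp g \<Longrightarrow> tp (\<lambda>x. f x + g x)"
  unfolding tp_def
proof (elim exE conjE)
  fix L1 L2 assume "\<forall>p\<in>set L1. int_vec (fst p)" "\<forall>x. f x = (\<Sum>p\<leftarrow>L1. snd p * chi (fst p) x)"
    "\<forall>p\<in>set L2. int_vec (fst p)" "\<forall>x. g x = (\<Sum>p\<leftarrow>L2. snd p * chi (fst p) x)"
  then show "\<exists>L. (\<forall>p\<in>set L. int_vec (fst p)) \<and> (\<forall>x. f x + g x = (\<Sum>p\<leftarrow>L. snd p * chi (fst p) x))"
    by (intro exI[of _ "L1 @ L2"]) auto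
qed

lemma sum_list_mult_pairs:
  fixes f g :: "'a \<Rightarrow> complex"
  shows "(\<Sum>p\<leftarrow>L1. f p) * (\<Sum>q\<leftarrow>L2. g q) = (\<Sum>r\<leftarrow>concat (map (\<lambda>p. map (\<lambda>q. (p, q)) L2) L1). f (fst r) * g (snd r))"
proof (induction L1)
  case (Cons a L1)
  have "(\<Sum>p\<leftarrow>a # L1. f p) * (\<Sum>q\<leftarrow>L2. g q) = f a * (\<Sum>q\<leftarrow>L2. g q) + (\<Sum>p\<leftarrow>L1. f p) * (\<Sum>q\<leftarrow>L2. g q)"
    by (simp add: algebra_simps)
  also have "f a * (\<Sum>q\<leftarrow>L2. g q) = (\<Sum>q\<leftarrow>L2. f a * g q)" by (simp add: sum_list_const_mult)
  finally show ?case using Cons by (simp add: o_def)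
qed simp

lemma tp_mult: "tp f \<Longrightarrow> tp g \<Longrightarrow> tp (\<lambda>x. f x * g x)"
  unfolding tp_def
proof (elim exE conjE)
  fix L1 L2 assume 1: "\<forall>p\<in>set L1. int_vec (fst p)" "\<forall>x. f x = (\<Sum>p\<leftarrow>L1. snd p * chi (fst p) x)"
    and 2: "\<forall>p\<in>set L2. int_vec (fst p)" "\<forall>x. g x = (\<Sum>p\<leftarrow>L2. snd p * chi (fst p) x)"
  define L where "L = map (\<lambda>r. (fst (fst r) + fst (snd r), snd (fst r) * snd (snd r))) (concat (map (\<lambda>p. map (\<lambda>q. (p, q)) L2) L1))"
  have "f x * g x = (\<Sum>p\<leftarrow>L. snd p * chi (fst p) x)" for x
    unfolding 1(2)[rule_format] 2(2)[rule_format] sum_list_mult_pairs L_def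
    by (simp add: o_def chi_mult[symmetric] algebra_simps)
  moreover have "\<forall>p\<in>set L. int_vec (fst p)" using 1(1) 2(1) by (auto simp: L_def)
  ultimately show "\<exists>L. (\<forall>p\<in>set L. int_vec (fst p)) \<and> (\<forall>x. f x * g x = (\<Sum>p\<leftarrow>L. snd p * chi (fst p) x))"
    by blast
qed

lemma cnj_sum_list: "cnj (\<Sum>p\<leftarrow>L. f p) = (\<Sum>p\<leftarrow>L. cnj (f p))"
  by (induction L) auto

lemma tp_cnj: "tp f \<Longrightarrow> tp (\<lambda>x. cnj (f x))"
  unfolding tp_def
proof (elim exE conjE)
  fix L assume 1: "\<forall>p\<in>set L. int_vec (fst p)" "\<forall>x. f x = (\<Sum>p\<leftarrow>L. snd p * chi (fst p) x)"
  define L' where "L' = map (\<lambda>p. (- fst p, cnj (snd p))) L"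
  have "cnj (f x) = (\<Sum>p\<leftarrow>L'. snd p * chi (fst p) x)" for x
    unfolding 1(2)[rule_format] cnj_sum_list L'_def by (simp add: o_def chi_cnj)
  moreover have "\<forall>p\<in>set L'. int_vec (fst p)" using 1(1) by (auto simp: L'_def)
  ultimately show "\<exists>L. (\<forall>p\<in>set L. int_vec (fst p)) \<and> (\<forall>x. cnj (f x) = (\<Sum>p\<leftarrow>L. snd p * chi (fst p) x))"
    by blast
qed

lemma tp_sum: "finite I \<Longrightarrow> (\<And>i. i \<in> I \<Longrightarrow> tp (f i)) \<Longrightarrow> tp (\<lambda>x. \<Sum>i\<in>I. f i x)"
  by (induction I rule: finite_induct) (auto intro: tp_add tp_const)

lemma chi_axis: "chi (axis i 1) x = cis (2 * pi * x $ i)"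
  by (simp add: chi_def inner_axis')

lemma tp_cos: "tp (\<lambda>x::real^'d. complex_of_real (cos (2 * pi * x $ i)))"
proof (rule tpI[of "[(axis i 1, 1/2), (- axis i 1, 1/2)]"])
  fix x :: "real^'d"
  have "chi (- axis i 1) x = cnj (chi (axis i 1) x)" by (simp add: chi_cnj)
  then show "complex_of_real (cos (2 * pi * x $ i)) = (\<Sum>p\<leftarrow>[(axis i 1, 1/2), (- axis i 1, 1/2)]. snd p * chi (fst p) x)"
    by (simp add: chi_axis complex_eq_iff)
qed (auto intro!: int_vec_minus int_vec_axis)

lemma tp_sin: "tp (\<lambda>x::real^'d. complex_of_real (sin (2 * pi * x $ i)))"
proof (rule tpI[of "[(axis i 1, - \<i>/2), (- axis i 1, \<i>/2)]"])
  fix x :: "real^'d"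
  have "chi (- axis i 1) x = cnj (chi (axis i 1) x)" by (simp add: chi_cnj)
  then show "complex_of_real (sin (2 * pi * x $ i)) = (\<Sum>p\<leftarrow>[(axis i 1, - \<i>/2), (- axis i 1, \<i>/2)]. snd p * chi (fst p) x)"
    by (simp add: chi_axis complex_eq_iff)
qed (auto intro!: int_vec_minus int_vec_axis)

definition EE :: "real^'d \<Rightarrow> (real^'d) \<times> (real^'d)" where
  "EE x = ((\<chi> i. cos (2 * pi * x $ i)), (\<chi> i. sin (2 * pi * x $ i)))"

lemma continuous_EE: "continuous_on S EE"
  unfolding EE_def by (intro continuous_intros continuous_on_vec_lambda)

lemma tp_linear:
  assumes L: "bounded_linear (L :: (real^'d) \<times> (real^'d) \<Rightarrow> real)"
  shows "tp (\<lambda>x. complex_of_real (L (EE x)))"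
proof -
  interpret bounded_linear L by (rule L)
  have dec: "L (u, v) = (\<Sum>i\<in>UNIV. u $ i * L (axis i 1, 0)) + (\<Sum>i\<in>UNIV. v $ i * L (0, axis i 1))" for u v :: "real^'d"
  proof -
    have "(u, v) = (\<Sum>i\<in>UNIV. u $ i *\<^sub>R (axis i 1, 0)) + (\<Sum>i\<in>UNIV. v $ i *\<^sub>R (0, axis i 1))"
      using basis_expansion[of u] basis_expansion[of v]
      by (simp add: prod_eq_iff fst_sum snd_sum scalar_mult_eq_scaleR)
    moreover have sc1: "L (c *\<^sub>R w, 0) = c * L (w, 0)" for c w
      using scaleR[of c "(w, 0::real^'d)"] by simp
    moreover have sc2: "L (0, c *\<^sub>R w) = c * L (0, w)" for c w
      using scaleR[of c "(0::real^'d, w)"] by simp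
    ultimately show ?thesis by (simp add: add sum)
  qed
  have "tp (\<lambda>x. (\<Sum>i\<in>UNIV. complex_of_real (cos (2 * pi * x $ i)) * of_real (L (axis i 1, 0))) +
                (\<Sum>i\<in>UNIV. complex_of_real (sin (2 * pi * x $ i)) * of_real (L (0, axis i 1))))"
    by (intro tp_add tp_sum tp_mult tp_cos tp_sin tp_const) auto
  moreover have "complex_of_real (L (EE x)) = (\<Sum>i\<in>UNIV. complex_of_real (cos (2 * pi * x $ i)) * of_real (L (axis i 1, 0))) +
                (\<Sum>i\<in>UNIV. complex_of_real (sin (2 * pi * x $ i)) * of_real (L (0, axis i 1)))" for x
  proof -
    have "L (EE x) = (\<Sum>i\<in>UNIV. (\<chi> i. cos (2 * pi * x $ i)) $ i * L (axis i 1, 0)) + (\<Sum>i\<in>UNIV. (\<chi> i. sin (2 * pi * x $ i)) $ i * L (0, axis i 1))"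
      unfolding EE_def by (rule dec)
    then show ?thesis by (simp only: of_real_add of_real_sum of_real_mult vec_lambda_beta)
  qed
  ultimately show ?thesis by presburger
qed

lemma tp_poly: "real_polynomial_function p \<Longrightarrow> tp (\<lambda>x. complex_of_real (p (EE x)))"
proof (induction rule: real_polynomial_function.induct)
  case (linear f) then show ?case by (rule tp_linear)
next
  case (const c) then show ?case by (rule tp_const)
next
  case (add f g) then show ?case by (simp add: tp_add)
next
  case (mult f g) then show ?case by (simp add: tp_mult)
qed



lemma EE_eq:
  assumes "EE x = EE y" shows "int_vec (y - x)"
  unfolding int_vec_def
proof
  fix i
  from assms have "sin (2 * pi * y $ i) = sin (2 * pi * x $ i) \<and> cos (2 * pi * y $ i) = cos (2 * pi * x $ i)"
    by (auto simp: EE_def vec_eq_iff)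
  then obtain n :: int where "2 * pi * y $ i = 2 * pi * x $ i + 2 * pi * n"
    using sin_cos_eq_iff by blast
  then have "(2 * pi) * y $ i = (2 * pi) * (x $ i + n)" by (simp add: algebra_simps)
  then have "y $ i = x $ i + n" by simp
  then have "y $ i - x $ i = n" by simp
  then show "(y - x) $ i \<in> \<int>" by simp
qed

lemma EE_int: "int_vec m \<Longrightarrow> EE (x + m) = EE x"
proof -
  assume m: "int_vec m"
  have "sin (2 * pi * (x + m) $ i) = sin (2 * pi * x $ i) \<and> cos (2 * pi * (x + m) $ i) = cos (2 * pi * x $ i)" for i
  proof -
    obtain n where n: "m $ i = of_int n" using m by (auto simp: int_vec_def elim: Ints_cases)
    show ?thesis
      by (rule sin_cos_eq_iff[THEN iffD2], rule exI[of _ n]) (simp add: n algebra_simps)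
  qed
  then show ?thesis by (simp add: EE_def vec_eq_iff)
qed

lemma quotient_factor:
  fixes F :: "real^'d \<Rightarrow> complex"
  assumes cF: "continuous_on UNIV F" and pF: "per F"
  shows "\<exists>G. continuous_on (EE ` cbox 0 One) G \<and> (\<forall>x. F x = G (EE x))"
proof -
  define X where "X = EE ` cbox (0::real^'d) One"
  define G where "G y = F (SOME x. x \<in> cbox 0 One \<and> EE x = y)" for y
  have FG: "F x = G (EE x)" for x
  proof -
    have "x - fl x \<in> cbox 0 One \<and> EE (x - fl x) = EE x"
      using fl_cube[of x] EE_int[of "- fl x" x] int_vec_fl by (auto simp: int_vec_minus)
    then have ex: "\<exists>x'. x' \<in> cbox 0 One \<and> EE x' = EE x" by blast
    define x' where "x' = (SOME x'. x' \<in> cbox 0 One \<and> EE x' = EE x)"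
    have "EE x' = EE x" using someI_ex[OF ex] by (simp add: x'_def)
    then have "int_vec (x' - x)" using EE_eq[of x x'] by simp
    then have "F (x + (x' - x)) = F x" using pF unfolding per_def by blast
    then show ?thesis by (simp add: G_def x'_def[symmetric])
  qed
  have "continuous_on X G"
    unfolding continuous_openin_preimage_eq
  proof (intro allI impI)
    fix T :: "complex set" assume T: "open T"
    have eq: "cbox 0 One \<inter> EE -` (X \<inter> G -` T) = cbox 0 One \<inter> F -` T"
      using FG by (auto simp: X_def)
    have "openin (top_of_set (cbox 0 One)) (cbox 0 One \<inter> EE -` (X \<inter> G -` T))"
      unfolding eq by (rule continuous_openin_preimage_gen[OF continuous_on_subset[OF cF] T]) auto
    then show "openin (top_of_set X) (X \<inter> G -` T)"
      using Abstract_Topology_2.continuous_imp_quotient_map[OF continuous_EE X_def[symmetric] compact_cbox, of "X \<inter> G -` T"]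
      by auto
  qed
  then show ?thesis using FG X_def by blast
qed

lemma tp_integral:
  fixes F :: "real^'d \<Rightarrow> complex"
  assumes cF: "continuous_on UNIV F" and z: "\<And>k. int_vec k \<Longrightarrow> fco F k = 0"
    and q: "tp q"
  shows "integral (cbox 0 One) (\<lambda>x. F x * q x) = 0"
proof -
  obtain L where L: "\<forall>p\<in>set L. int_vec (fst p)" "\<And>x. q x = (\<Sum>p\<leftarrow>L. snd p * chi (fst p) x)"
    using q unfolding tp_def by blast
  have "(\<forall>p\<in>set L. int_vec (fst p)) \<Longrightarrow> ((\<lambda>x. F x * (\<Sum>p\<leftarrow>L. snd p * chi (fst p) x)) has_integral 0) (cbox 0 One)"
  proof (induction L)
    case Nil then show ?case by simp
  next
    case (Cons a L)
    have int: "(\<lambda>x. F x * chi (fst a) x) integrable_on cbox 0 One"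
      by (rule integrable_continuous, intro continuous_intros continuous_on_subset[OF cF]) auto
    have "fco F (- fst a) = 0" using Cons.prems by (auto intro!: z int_vec_minus)
    then have "((\<lambda>x. F x * chi (fst a) x) has_integral 0) (cbox 0 One)"
      using integrable_integral[OF int] by (simp add: fco_def)
    then have "((\<lambda>x. snd a * (F x * chi (fst a) x)) has_integral 0) (cbox 0 One)"
      using has_integral_mult_right[of _ 0 _ "snd a"] by simp
    from has_integral_add[OF this Cons.IH] Cons.prems show ?case
      by (simp add: algebra_simps)
  qed
  then show ?thesis using L by (simp add: integral_unique)
qed

lemma fourier_unique:
  fixes F :: "real^'d \<Rightarrow> complex"
  assumes cF: "continuous_on UNIV F" and pF: "per F" and z: "\<And>k. int_vec k \<Longrightarrow> fco F k = 0"
  shows "F x = 0"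
proof -
  obtain G where cG: "continuous_on (EE ` cbox 0 One) G" and FG: "\<And>x. F x = G (EE x)"
    using quotient_factor[OF cF pF] by blast
  have comp: "compact (EE ` cbox (0::real^'d) One)"
    by (intro compact_continuous_image continuous_EE compact_cbox)
  obtain B where B: "\<And>x. norm (F x) \<le> B"
  proof -
    have "\<exists>M. \<forall>x. \<bar>norm (F x)\<bar> \<le> M"
      by (rule cont_per_bounded) (use cF pF in \<open>auto intro!: continuous_intros simp: per_def\<close>)
    then show ?thesis using that by auto
  qed
  have B0: "0 \<le> B" using order_trans[OF norm_ge_zero B] .
  define I where "I = integral (cbox 0 One) (\<lambda>x. F x * cnj (F x))"
  have intF: "(\<lambda>x. F x * cnj (F x - Q x)) integrable_on cbox 0 One" if "continuous_on UNIV Q" for Q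
    by (rule integrable_continuous, intro continuous_intros continuous_on_subset[OF cF] continuous_on_subset[OF that]) auto
  have small: "norm I \<le> B * e" if e: "e > 0" for e
  proof -
    obtain p1 where p1: "real_polynomial_function p1" "\<And>y. y \<in> EE ` cbox 0 One \<Longrightarrow> \<bar>Re (G y) - p1 y\<bar> < e/2"
      using Stone_Weierstrass_real_polynomial_function[OF comp, of "\<lambda>y. Re (G y)" "e/2"] cG e
      by (auto intro: continuous_intros)
    obtain p2 where p2: "real_polynomial_function p2" "\<And>y. y \<in> EE ` cbox 0 One \<Longrightarrow> \<bar>Im (G y) - p2 y\<bar> < e/2"
      using Stone_Weierstrass_real_polynomial_function[OF comp, of "\<lambda>y. Im (G y)" "e/2"] cG e
      by (auto intro: continuous_intros)
    define Q where "Q x = complex_of_real (p1 (EE x)) + \<i> * complex_of_real (p2 (EE x))" for x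
    have tpQ: "tp Q" unfolding Q_def by (intro tp_add tp_mult tp_const tp_poly p1 p2)
    have cp: "continuous_on UNIV (\<lambda>x. p (EE x))" if "real_polynomial_function p" for p
    proof -
      have "continuous_on UNIV p" using continuous_real_polymonial_function[OF that]
        by (simp add: continuous_at_imp_continuous_on)
      then show ?thesis by (rule continuous_on_compose2[OF _ continuous_EE]) auto
    qed
    have cQ: "continuous_on UNIV Q" unfolding Q_def
      using cp[OF p1(1)] cp[OF p2(1)] by (intro continuous_intros) auto
    have close: "norm (F x - Q x) \<le> e" if "x \<in> cbox 0 One" for x
    proof -
      have "EE x \<in> EE ` cbox 0 One" using that by auto
      then have "\<bar>Re (F x) - p1 (EE x)\<bar> < e/2" "\<bar>Im (F x) - p2 (EE x)\<bar> < e/2"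
        using p1(2) p2(2) FG by auto
      moreover have "norm (F x - Q x) \<le> \<bar>Re (F x - Q x)\<bar> + \<bar>Im (F x - Q x)\<bar>" by (rule cmod_le)
      ultimately show ?thesis by (simp add: Q_def)
    qed
    have "integral (cbox 0 One) (\<lambda>x. F x * cnj (Q x)) = 0"
      by (rule tp_integral[OF cF z tp_cnj[OF tpQ]])
    moreover have "I = integral (cbox 0 One) (\<lambda>x. F x * cnj (F x - Q x)) + integral (cbox 0 One) (\<lambda>x. F x * cnj (Q x))"
    proof -
      have i2: "(\<lambda>x. F x * cnj (Q x)) integrable_on cbox 0 One"
        by (rule integrable_continuous, intro continuous_intros continuous_on_subset[OF cF] continuous_on_subset[OF cQ]) auto
      show ?thesis unfolding I_def
        by (subst integral_add[OF intF[OF cQ] i2, symmetric]) (simp add: algebra_simps)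
    qed
    moreover have "norm (integral (cbox 0 One) (\<lambda>x. F x * cnj (F x - Q x))) \<le> B * e"
    proof -
      have bnd: "norm (F x * cnj (F x - Q x)) \<le> B * e" if "x \<in> cbox 0 One" for x
      proof -
        have "cmod (cnj (F x - Q x)) = cmod (F x - Q x)" by (rule complex_mod_cnj)
        then show ?thesis using B[of x] close[OF that] B0 by (simp add: norm_mult mult_mono')
      qed
      have "0 \<le> B * e" using B0 e by simp
      from has_integral_bound[OF this integrable_integral[OF intF[OF cQ]] bnd] show ?thesis by simp
    qed
    ultimately show ?thesis by simp
  qed
  have "I = 0"
  proof (rule ccontr)
    assume "I \<noteq> 0"
    then have "norm I > 0" by simp
    show False
    proof (cases "B = 0")
      case True then show False using small[of 1] \<open>norm I > 0\<close> by simp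
    next
      case False
      then have "B > 0" using B0 by simp
      then show False using small[of "norm I / (2 * B)"] \<open>norm I > 0\<close> by (simp add: field_simps)
    qed
  qed
  define f where "f x = (norm (F x))\<^sup>2" for x
  have cf: "continuous_on UNIV f" unfolding f_def by (intro continuous_intros cF)
  have intf: "f integrable_on cbox 0 One" by (rule integrable_continuous, rule continuous_on_subset[OF cf]) auto
  have "complex_of_real (integral (cbox 0 One) f) = I"
    unfolding I_def integral_of_real_c[OF intf, symmetric] f_def complex_norm_square ..
  then have "(f has_integral 0) (cbox 0 One)" using \<open>I = 0\<close> integrable_integral[OF intf] by simp
  then have "f y = 0" if "y \<in> cbox 0 One" for y
    by (rule has_integral_0_cbox_imp_0[OF continuous_on_subset[OF cf], rotated 2]) (use that in \<open>auto simp: f_def box_ne_empty\<close>)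
  then have "F (x - fl x) = 0" using fl_cube[of x] by (simp add: f_def)
  moreover have "F x = F (x - fl x)" using pF by (intro periodic_cube) (auto simp: per_def)
  ultimately show ?thesis by simp
qed



lemma gw_alt: "gw s = 1 - cos (2 * pi * s)"
  unfolding gw_def using cos_double_sin[of "pi * s"] by (simp add: mult.assoc)

lemma cis_vderiv: "((\<lambda>t. cis (a * t)) has_vector_derivative (\<i> * a * cis (a * t))) (at t within S)"
  by (auto intro!: derivative_eq_intros simp: has_vector_derivative_complex_iff)

lemma osc_bound:
  fixes a T :: real assumes a: "a \<noteq> 0" and T: "T > 0"
  shows "norm (integral {0..T} (\<lambda>t. of_real (gw (t/T)) * cis (a*t))) \<le> 4 * pi^2 / (a^2 * T)"
proof -
  define e where "e t = cis (a * t)" for t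
  define G0 where "G0 t = 1 - cos (2 * pi * t / T)" for t
  define G1 where "G1 t = (2 * pi / T) * sin (2 * pi * t / T)" for t
  define G2 where "G2 t = (2 * pi / T)^2 * cos (2 * pi * t / T)" for t
  define c where "c = \<i> * complex_of_real a"
  have c0: "c \<noteq> 0" using a by (simp add: c_def)
  define A where "A t = of_real (G0 t) * e t / c - of_real (G1 t) * e t / c^2" for t
  define A' where "A' t = of_real (G0 t) * e t - of_real (G2 t) * e t / c^2" for t
  have dG0: "(G0 has_real_derivative G1 t) (at t within S)" for t S
    using T unfolding G0_def G1_def by (auto intro!: derivative_eq_intros simp: field_simps)
  have dG1: "(G1 has_real_derivative G2 t) (at t within S)" for t S
    using T unfolding G1_def G2_def by (auto intro!: derivative_eq_intros simp: field_simps power2_eq_square)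
  have de: "(e has_vector_derivative c * e t) (at t within S)" for t S
    unfolding e_def c_def using cis_vderiv[of a t S] by simp
  have dA: "(A has_vector_derivative A' t) (at t within S)" for t S
  proof -
    have "(A has_vector_derivative
       ((of_real (G0 t) * (c * e t) + of_real (G1 t) * e t) / c
        - (of_real (G1 t) * (c * e t) + of_real (G2 t) * e t) / c^2)) (at t within S)"
      unfolding A_def
      by (intro has_vector_derivative_diff has_vector_derivative_divide has_vector_derivative_mult
          has_vector_derivative_of_real dG0 dG1 de)
    moreover have "(of_real (G0 t) * (c * e t) + of_real (G1 t) * e t) / c
        - (of_real (G1 t) * (c * e t) + of_real (G2 t) * e t) / c^2 = A' t"
      using c0 unfolding A'_def by (simp add: field_simps power2_eq_square)
    ultimately show ?thesis by simp
  qed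
  have ftc: "(A' has_integral (A T - A 0)) {0..T}"
    by (rule fundamental_theorem_of_calculus) (use T dA in auto)
  have AT: "A T = 0" "A 0 = 0" using T by (simp_all add: A_def G0_def G1_def)
  have ce: "continuous_on UNIV e" unfolding e_def by (intro continuous_intros)
  have i1: "(\<lambda>t. of_real (G0 t) * e t) integrable_on {0..T}"
    using T by (intro integrable_continuous_interval) (auto intro!: continuous_intros continuous_on_subset[OF ce] simp: G0_def)
  have i2: "(\<lambda>t. of_real (G2 t) * e t / c^2) integrable_on {0..T}"
    using T c0 by (intro integrable_continuous_interval) (auto intro!: continuous_intros continuous_on_subset[OF ce] simp: G2_def)
  have "integral {0..T} A' = 0" using ftc AT by (simp add: integral_unique)
  then have eq: "integral {0..T} (\<lambda>t. of_real (G0 t) * e t) = integral {0..T} (\<lambda>t. of_real (G2 t) * e t / c^2)"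
    unfolding A'_def using integral_diff[OF i1 i2] by simp
  have gwG: "(\<lambda>t. of_real (gw (t/T)) * cis (a*t)) = (\<lambda>t. of_real (G0 t) * e t)"
    by (rule ext) (simp add: gw_alt G0_def e_def)
  have nc: "norm (c^2) = a^2" by (simp add: c_def norm_mult norm_power)
  have bnd: "norm (of_real (G2 t) * e t / c^2) \<le> (2 * pi / T)^2 / a^2" for t
  proof -
    have "\<bar>G2 t\<bar> \<le> (2 * pi / T)^2" unfolding G2_def by (simp add: abs_mult mult_left_le)
    then show ?thesis using a by (simp add: norm_mult norm_divide nc e_def divide_right_mono)
  qed
  have "norm (integral {0..T} (\<lambda>t. of_real (G2 t) * e t / c^2)) \<le> (2 * pi / T)^2 / a^2 * T"
    using has_integral_bound_real[OF _ finite.emptyI integrable_integral[OF i2], of "(2 * pi / T)^2 / a^2"] bnd T by simp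
  also have "\<dots> = 4 * pi^2 / (a^2 * T)" using T by (simp add: power2_eq_square field_simps)
  finally show ?thesis unfolding gwG eq .
qed



definition en :: "nat \<Rightarrow> real^'d" where "en = from_nat_into {k. int_vec k}"

lemma Zs_countable: "countable {k::real^'d. int_vec k}"
proof -
  have "{k::real^'d. int_vec k} \<subseteq> range (\<lambda>g::'d \<Rightarrow> int. \<chi> i. of_int (g i))"
  proof
    fix k :: "real^'d" assume "k \<in> {k. int_vec k}"
    then have "k = (\<lambda>g::'d \<Rightarrow> int. \<chi> i. of_int (g i)) (\<lambda>i. \<lfloor>k$i\<rfloor>)" by (auto simp: int_vec_def vec_eq_iff)
    then show "k \<in> range (\<lambda>g::'d \<Rightarrow> int. \<chi> i. of_int (g i))" by (metis rangeI)
  qed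
  then show ?thesis by (rule countable_subset) auto
qed

lemma Zs_infinite: "infinite {k::real^'d. int_vec k}"
proof -
  have "inj (\<lambda>n::nat. (of_nat n :: real) *\<^sub>R (One::real^'d))"
    by (auto simp: inj_def vec_eq_iff)
  moreover have "range (\<lambda>n::nat. (of_nat n :: real) *\<^sub>R (One::real^'d)) \<subseteq> {k. int_vec k}"
    by (auto simp: int_vec_def)
  ultimately show ?thesis using infinite_iff_countable_subset by blast
qed

lemma bij_en: "bij_betw (en :: nat \<Rightarrow> real^'d) UNIV {k. int_vec k}"
  unfolding en_def by (rule bij_betw_from_nat_into[OF Zs_countable Zs_infinite])

lemma en_int: "int_vec (en n)" using bij_en unfolding bij_betw_def by auto
lemma en_inj: "en m = en n \<Longrightarrow> m = n" using bij_en unfolding bij_betw_def inj_on_def by auto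
lemma en_surj: "int_vec k \<Longrightarrow> \<exists>n. en n = k" using bij_en unfolding bij_betw_def
  by (metis (mono_tags) imageE mem_Collect_eq)

lemma fourier_repr:
  fixes h :: "real^'d \<Rightarrow> real"
  assumes ch: "continuous_on UNIV h" and ph: "per h"
    and sc: "summable (\<lambda>n. norm (fco (\<lambda>x. of_real (h x)) (en n)))"
  shows "of_real (h x) = (\<Sum>n. fco (\<lambda>x. of_real (h x)) (en n) * chi (en n) x)"
proof -
  define c where "c k = fco (\<lambda>x. of_real (h x)) k" for k :: "real^'d"
  define H :: "real^'d \<Rightarrow> complex" where "H x = (\<Sum>n. c (en n) * chi (en n) x)" for x
  have ulim: "uniform_limit S (\<lambda>N x. \<Sum>n<N. c (en n) * chi (en n) x * g x) (\<lambda>x. \<Sum>n. c (en n) * chi (en n) x * g x) sequentially"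
    if "\<And>x. norm (g x) \<le> 1" for S g
    by (rule Weierstrass_m_test[OF _ sc[folded c_def]]) (use that in \<open>auto simp: norm_mult intro: mult_left_le\<close>)
  have sumx: "summable (\<lambda>n. c (en n) * chi (en n) x)" for x
    by (rule summable_norm_cancel, rule summable_comparison_test[OF _ sc[folded c_def]]) (auto simp: norm_mult)
  have cH: "continuous_on UNIV H"
  proof -
    have "uniform_limit UNIV (\<lambda>N x. \<Sum>n<N. c (en n) * chi (en n) x * 1) (\<lambda>x. \<Sum>n. c (en n) * chi (en n) x * 1) sequentially"
      by (rule ulim) simp
    then have "uniform_limit UNIV (\<lambda>N x. \<Sum>n<N. c (en n) * chi (en n) x) H sequentially"
      by (simp add: H_def[abs_def])
    then show ?thesis by (rule uniform_limit_theorem[rotated]) (auto intro!: always_eventually continuous_intros)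
  qed
  have pH: "per H" unfolding per_def H_def by (auto simp: chi_int_period en_int)
  have fH: "fco H k = c k" if k: "int_vec k" for k :: "real^'d"
  proof -
    obtain n0 where n0: "en n0 = k" using en_surj[OF k] by blast
    have ul: "uniform_limit (cbox 0 One) (\<lambda>N x. \<Sum>n<N. c (en n) * chi (en n) x * chi (-k) x) (\<lambda>x. H x * chi (-k) x) sequentially"
      using ulim[of "chi (-k)" "cbox 0 One"] by (simp add: H_def suminf_mult2[OF sumx])
    obtain I J where I: "\<And>N. ((\<lambda>x. \<Sum>n<N. c (en n) * chi (en n) x * chi (-k) x) has_integral I N) (cbox 0 One)"
      and J: "((\<lambda>x. H x * chi (-k) x) has_integral J) (cbox 0 One)" and lim: "I \<longlonglongrightarrow> J"
      by (rule uniform_limit_integral_cbox[OF ul]) (auto intro!: continuous_intros)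
    have IN: "I N = (if n0 < N then c k else 0)" for N
    proof -
      have "I N = integral (cbox 0 One) (\<lambda>x. \<Sum>n<N. c (en n) * chi (en n) x * chi (-k) x)"
        using I[of N] by (rule integral_unique[symmetric])
      also have "\<dots> = (\<Sum>n<N. c (en n) * integral (cbox 0 One) (chi (en n - k)))"
        by (subst integral_sum) (auto intro!: integrable_continuous continuous_intros simp: mult.assoc chi_mult)
      also have "\<dots> = (\<Sum>n<N. if n = n0 then c k else 0)"
        by (rule sum.cong) (auto simp: chi_orth en_int int_vec_diff k n0 dest: en_inj, metis en_inj n0)
      also have "\<dots> = (if n0 < N then c k else 0)" by (simp add: sum.delta)
      finally show ?thesis .
    qed
    have "eventually (\<lambda>N. I N = c k) sequentially"
      using IN by (intro eventually_sequentiallyI[of "Suc n0"]) auto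
    then have "I \<longlonglongrightarrow> c k" by (rule tendsto_eventually)
    then have "J = c k" using lim LIMSEQ_unique by blast
    then show ?thesis using J by (simp add: fco_def integral_unique)
  qed
  define F where "F x = H x - of_real (h x)" for x
  have "F x = 0"
  proof (rule fourier_unique)
    show "continuous_on UNIV F" unfolding F_def by (intro continuous_intros cH ch)
    show "per F" using pH ph by (auto simp: per_def F_def)
    show "fco F k = 0" if k: "int_vec k" for k
    proof -
      have i1: "(\<lambda>x. H x * chi (-k) x) integrable_on cbox 0 One"
        by (rule integrable_continuous, intro continuous_intros continuous_on_subset[OF cH]) auto
      have i2: "(\<lambda>x. of_real (h x) * chi (-k) x) integrable_on cbox 0 One"
        by (rule integrable_continuous, intro continuous_intros continuous_on_subset[OF ch]) auto
      have "fco F k = fco H k - c k"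
        unfolding fco_def F_def c_def using integral_diff[OF i1 i2] by (simp add: left_diff_distrib)
      then show ?thesis using fH[OF k] by simp
    qed
  qed
  then show ?thesis by (simp add: F_def H_def c_def)
qed



lemma gw_bound: "\<bar>gw s\<bar> \<le> 2"
proof -
  have "(sin (pi * s))^2 \<le> 1" using abs_sin_le_one abs_square_le_1 by blast
  then show ?thesis unfolding gw_def by simp
qed

lemma continuous_gw0: "continuous_on UNIV gw"
  unfolding gw_def[abs_def] by (intro continuous_intros)

lemma continuous_gw[continuous_intros]: "continuous_on S (\<lambda>t. gw (f t))" if "continuous_on S f"
  by (rule continuous_on_compose2[OF continuous_gw0 that]) auto

lemma gw_integral:
  fixes T :: real assumes T: "T > 0"
  shows "((\<lambda>t. gw (t / T)) has_integral T) {0..T}"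
proof -
  define F where "F t = t - (T / (2 * pi)) * sin (2 * pi * t / T)" for t
  have "((\<lambda>t. gw (t / T)) has_integral (F T - F 0)) {0..T}"
  proof (rule fundamental_theorem_of_calculus)
    show "0 \<le> T" using T by simp
    show "(F has_vector_derivative gw (t / T)) (at t within {0..T})" for t
    proof -
      have "(F has_real_derivative 1 - cos (2 * pi * t / T)) (at t within {0..T})"
        unfolding F_def using T by (auto intro!: derivative_eq_intros simp: field_simps)
      then show ?thesis by (simp add: has_real_derivative_iff_has_vector_derivative gw_alt)
    qed
  qed
  moreover have "F T - F 0 = T" using T by (simp add: F_def)
  ultimately show ?thesis by simp
qed

lemma K_bound:
  fixes k \<omega> \<theta> :: "real^'d" and T cc \<tau> :: real
  assumes T: "T > 0" and cc: "cc > 0" and dio: "\<bar>k \<bullet> \<omega>\<bar> > cc * norm k powr (-\<tau>)"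
  shows "norm (integral {0..T} (\<lambda>t. of_real (gw (t / T)) * chi k (\<theta> + t *\<^sub>R \<omega>))) \<le> norm k powr (2 * \<tau>) / (cc^2 * T)"
proof -
  define b where "b = k \<bullet> \<omega>"
  have b0: "b \<noteq> 0"
  proof -
    have "0 \<le> cc * norm k powr (-\<tau>)" using cc by simp
    then show ?thesis using dio unfolding b_def by auto
  qed
  have eq: "(\<lambda>t. of_real (gw (t / T)) * chi k (\<theta> + t *\<^sub>R \<omega>)) = (\<lambda>t. chi k \<theta> * (of_real (gw (t / T)) * cis ((2 * pi * b) * t)))"
    by (rule ext) (simp add: chi_add, simp add: chi_def b_def algebra_simps)
  have "norm (integral {0..T} (\<lambda>t. of_real (gw (t / T)) * cis ((2 * pi * b) * t))) \<le> 4 * pi^2 / ((2 * pi * b)^2 * T)"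
    by (rule osc_bound) (use b0 T in auto)
  also have "\<dots> = 1 / (b^2 * T)" by (simp add: power2_eq_square field_simps)
  also have "\<dots> \<le> norm k powr (2 * \<tau>) / (cc^2 * T)"
  proof -
    have nk: "0 < norm k powr (-\<tau>)"
    proof -
      have "k \<noteq> 0" using dio cc by (auto simp: powr_def)
      then show ?thesis by simp
    qed
    have "cc * norm k powr (-\<tau>) < \<bar>b\<bar>" using dio by (simp add: b_def)
    then have "(cc * norm k powr (-\<tau>))^2 \<le> b^2"
      using cc nk by (metis abs_ge_zero less_le mult_pos_pos power2_abs power_mono)
    then have "cc^2 * norm k powr (-2 * \<tau>) \<le> b^2"
    proof -
      have "(norm k powr (-\<tau>))^2 = norm k powr (-2 * \<tau>)"
        by (simp add: power2_eq_square powr_add[symmetric])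
      then show "(cc * norm k powr (-\<tau>))^2 \<le> b^2 \<Longrightarrow> cc^2 * norm k powr (-2 * \<tau>) \<le> b^2"
        by (simp add: power_mult_distrib)
    qed
    moreover have "norm k powr (-2 * \<tau>) * norm k powr (2 * \<tau>) = 1"
      using nk by (simp add: powr_add[symmetric])
    ultimately have "cc^2 \<le> b^2 * norm k powr (2 * \<tau>)"
    proof -
      assume A: "cc^2 * norm k powr (-2 * \<tau>) \<le> b^2" and PQ: "norm k powr (-2 * \<tau>) * norm k powr (2 * \<tau>) = 1"
      have "cc^2 * norm k powr (-2 * \<tau>) * norm k powr (2 * \<tau>) \<le> b^2 * norm k powr (2 * \<tau>)"
        by (rule mult_right_mono[OF A]) simp
      then show ?thesis by (simp only: mult.assoc PQ mult_1_right)
    qed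
    then show ?thesis using T cc b0
      by (simp add: divide_simps mult.commute)
  qed
  finally show ?thesis unfolding eq by (simp add: norm_mult)
qed



theorem mainTheorem4:
  fixes \<omega> :: "real^'d" and c \<tau> :: real and l :: nat and h :: "real^'d \<Rightarrow> real"
  assumes "diophantine c \<tau> \<omega>"
    and "torus_periodic h"
    and "Ck l h"
    and "real l > real CARD('d) + 2 * \<tau>"
  shows "\<exists>C>0. \<forall>\<theta>::real^'d. \<forall>T::real. T > 0 \<longrightarrow>
    \<bar>(1 / T) * integral {0..T} (\<lambda>t. gw (t / T) * h (\<theta> + t *\<^sub>R \<omega>))
       - integral (cbox 0 One) h\<bar> \<le> C * T powr (-2)"
proof -
  have ph: "per h" using assms(2) by (simp add: per_def torus_periodic_def)
  have ch: "continuous_on UNIV h" by (rule Ck_cont[OF assms(3)])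
  have c0: "c > 0" and tau: "\<tau> \<ge> real CARD('d) - 1"
    and dio: "\<And>k. int_vec k \<Longrightarrow> k \<noteq> 0 \<Longrightarrow> \<bar>k \<bullet> \<omega>\<bar> > c * norm k powr (-\<tau>)"
    using assms(1) by (auto simp: diophantine_def)
  have "0 < CARD('d)" by simp
  then have "(1::real) \<le> real CARD('d)" by linarith
  then have tau0: "\<tau> \<ge> 0" using tau by linarith
  define cf where "cf k = fco (\<lambda>x. of_real (h x)) k" for k :: "real^'d"
  obtain M where M0: "M \<ge> 0" and M: "\<And>k. int_vec k \<Longrightarrow> k \<noteq> 0 \<Longrightarrow> norm (cf k) \<le> M * norm k powr (- real l)"
    using decay[OF assms(3) ph] unfolding cf_def by blast
  define \<sigma> where "\<sigma> = real l - 2 * \<tau>"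
  have \<sigma>: "\<sigma> > real CARD('d)" using assms(4) by (simp add: \<sigma>_def)
  obtain B where B: "\<And>S::(real^'d) set. finite S \<Longrightarrow> S \<subseteq> {k. int_vec k} \<Longrightarrow>
            (\<Sum>k\<in>S. if k = 0 then 0 else norm k powr (-\<sigma>)) \<le> B"
    using lattice_bound[OF \<sigma>] by blast
  define wt where "wt k = (if k = 0 then 1 else norm k powr (2 * \<tau>))" for k :: "real^'d"
  have wt1: "1 \<le> wt k" if "int_vec k" for k
    unfolding wt_def using int_vec_norm_ge1[OF that] tau0 by (auto intro: ge_one_powr_ge_zero)
  define u where "u n = norm (cf (en n)) * wt (en n)" for n
  have u0: "0 \<le> u n" for n using wt1[OF en_int[of n]] by (simp add: u_def)
  have cfwt: "norm (cf k) * wt k \<le> norm (cf 0) * (if k = 0 then 1 else 0) + M * (if k = 0 then 0 else norm k powr (-\<sigma>))"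
    if k: "int_vec k" for k
  proof (cases "k = 0")
    case True then show ?thesis by (simp add: wt_def)
  next
    case False
    have "norm (cf k) * wt k \<le> M * norm k powr (- real l) * norm k powr (2 * \<tau>)"
      using M[OF k False] False by (simp add: wt_def mult_right_mono)
    also have "\<dots> = M * norm k powr (-\<sigma>)"
      by (simp add: mult.assoc powr_add[symmetric] \<sigma>_def)
    finally show ?thesis using False by simp
  qed
  have usum: "(\<Sum>n<N. u n) \<le> norm (cf 0) + M * B" for N
  proof -
    have inj: "inj_on en {..<N}" using en_inj by (auto simp: inj_on_def)
    have "(\<Sum>n<N. u n) = (\<Sum>k\<in>(en::nat\<Rightarrow>real^'d) ` {..<N}. norm (cf k) * wt k)"
      by (simp add: sum.reindex[OF inj] u_def)
    also have "\<dots> \<le> (\<Sum>k\<in>(en::nat\<Rightarrow>real^'d) ` {..<N}. norm (cf 0) * (if k = 0 then 1 else 0) + M * (if k = 0 then 0 else norm k powr (-\<sigma>)))"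
      by (rule sum_mono, rule cfwt) (auto simp: en_int)
    also have "\<dots> = norm (cf 0) * (\<Sum>k\<in>(en::nat\<Rightarrow>real^'d) ` {..<N}. (if k = 0 then 1 else 0)) + M * (\<Sum>k\<in>(en::nat\<Rightarrow>real^'d) ` {..<N}. (if k = 0 then 0 else norm k powr (-\<sigma>)))"
      by (simp only: sum.distrib sum_distrib_left)
    also have "(\<Sum>k\<in>(en::nat\<Rightarrow>real^'d) ` {..<N}. (if k = 0 then 1 else 0)) \<le> (1::real)"
      by (simp add: sum.delta)
    also have "(\<Sum>k\<in>(en::nat\<Rightarrow>real^'d) ` {..<N}. (if k = 0 then 0 else norm k powr (-\<sigma>))) \<le> B"
      by (rule B) (auto intro: en_int)
    finally show ?thesis using M0 by (simp add: mult_left_mono)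
  qed
  have su: "summable u" by (rule summableI_nonneg_bounded[OF u0 usum])
  have sc: "summable (\<lambda>n. norm (cf (en n)))"
    by (rule summable_comparison_test[OF _ su]) (auto simp: u_def intro!: mult_left_le_one_le wt1 en_int
        intro: order_trans[OF _ mult_right_mono[OF order_refl]] exI[of _ 0] simp del: norm_ge_zero;
       metis en_int mult_le_cancel_left1 norm_ge_zero not_le wt1 less_le_trans)
  have repr: "of_real (h x) = (\<Sum>n. cf (en n) * chi (en n) x)" for x
    using fourier_repr[OF ch ph sc[unfolded cf_def]] unfolding cf_def .
  define S where "S = suminf u"
  have S0: "0 \<le> S" unfolding S_def using su u0 by (simp add: suminf_nonneg)
  show ?thesis
  proof (intro exI[of _ "S / c^2 + 1"] conjI allI impI)
    show "0 < S / c^2 + 1" using S0 c0 by (simp add: add_nonneg_pos)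
    fix \<theta> :: "real^'d" and T :: real assume T: "T > 0"
    define K where "K k = integral {0..T} (\<lambda>t. of_real (gw (t / T)) * chi k (\<theta> + t *\<^sub>R \<omega>))" for k
    define J where "J = integral {0..T} (\<lambda>t. of_real (gw (t / T)) * of_real (h (\<theta> + t *\<^sub>R \<omega>)) :: complex)"
    have cline: "continuous_on {0..T} (\<lambda>t. \<theta> + t *\<^sub>R \<omega>)" by (intro continuous_intros)
    have sJ: "(\<lambda>n. cf (en n) * K (en n)) sums J"
    proof -
      have ul: "uniform_limit {0..T} (\<lambda>N t. \<Sum>n<N. cf (en n) * chi (en n) (\<theta> + t *\<^sub>R \<omega>) * of_real (gw (t / T)))
          (\<lambda>t. \<Sum>n. cf (en n) * chi (en n) (\<theta> + t *\<^sub>R \<omega>) * of_real (gw (t / T))) sequentially"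
      proof (rule Weierstrass_m_test[of _ _ "\<lambda>n. 2 * norm (cf (en n))"])
        show "summable (\<lambda>n. 2 * norm (cf (en n)))" using sc by (rule summable_mult)
        show "norm (cf (en n) * chi (en n) (\<theta> + t *\<^sub>R \<omega>) * of_real (gw (t / T))) \<le> 2 * norm (cf (en n))" for n t
          using gw_bound[of "t/T"] by (simp add: norm_mult) (metis mult.commute mult_left_mono norm_ge_zero)
      qed
      have sumx: "summable (\<lambda>n. cf (en n) * chi (en n) x)" for x
        by (rule summable_norm_cancel, rule summable_comparison_test[OF _ sc]) (auto simp: norm_mult)
      have lim_eq: "(\<lambda>t. \<Sum>n. cf (en n) * chi (en n) (\<theta> + t *\<^sub>R \<omega>) * of_real (gw (t / T))) =
          (\<lambda>t. of_real (gw (t / T)) * of_real (h (\<theta> + t *\<^sub>R \<omega>)))"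
        by (rule ext, subst suminf_mult2[OF sumx, symmetric], subst repr[symmetric], simp add: mult.commute)
      obtain I J' where I: "\<And>N. ((\<lambda>t. \<Sum>n<N. cf (en n) * chi (en n) (\<theta> + t *\<^sub>R \<omega>) * of_real (gw (t / T))) has_integral I N) {0..T}"
        and J': "((\<lambda>t. of_real (gw (t / T)) * of_real (h (\<theta> + t *\<^sub>R \<omega>))) has_integral J') {0..T}"
        and lim: "I \<longlonglongrightarrow> J'"
        by (rule uniform_limit_integral[OF ul[unfolded lim_eq]])
          (use T in \<open>auto intro!: continuous_intros continuous_on_compose2[OF continuous_on_chi cline] simp: o_def\<close>)
      have "J' = J" using J' by (simp add: J_def integral_unique)
      have IN: "I N = (\<Sum>n<N. cf (en n) * K (en n))" for N
      proof -
        have "I N = integral {0..T} (\<lambda>t. \<Sum>n<N. cf (en n) * chi (en n) (\<theta> + t *\<^sub>R \<omega>) * of_real (gw (t / T)))"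
          using I[of N] by (rule integral_unique[symmetric])
        also have "\<dots> = (\<Sum>n<N. cf (en n) * K (en n))"
          unfolding K_def using T
          by (subst integral_sum)
             (auto intro!: integrable_continuous_interval continuous_intros continuous_on_compose2[OF continuous_on_chi cline]
               simp: mult.assoc mult.commute mult.left_commute)
        finally show ?thesis .
      qed
      have "I = (\<lambda>N. \<Sum>n<N. cf (en n) * K (en n))" by (rule ext) (rule IN)
      then show ?thesis unfolding sums_def using lim \<open>J' = J\<close> by simp
    qed
    obtain n0 where n0: "en n0 = (0::real^'d)" using en_surj[of 0] by auto
    have K0: "K 0 = of_real T"
    proof -
      have "((\<lambda>t. complex_of_real (gw (t / T))) has_integral of_real T) {0..T}"
        by (rule has_integral_of_real[OF gw_integral[OF T]])
      then show ?thesis by (simp add: K_def integral_unique)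
    qed
    define v where "v n = cf (en n) * K (en n) / of_real T - (if n = n0 then cf 0 else 0)" for n
    have sv: "v sums (J / of_real T - cf 0)"
      unfolding v_def using sums_diff[OF sums_divide[OF sJ] sums_single[of n0 "\<lambda>_. cf 0"]] by simp
    have vb: "norm (v n) \<le> u n / (c^2 * T^2)" for n
    proof (cases "n = n0")
      case True then show ?thesis using u0[of n] T c0 by (simp add: v_def n0 K0)
    next
      case False
      then have k0: "(en n :: real^'d) \<noteq> 0" using n0 en_inj by metis
      have "norm (K (en n)) \<le> norm (en n :: real^'d) powr (2 * \<tau>) / (c^2 * T)"
        unfolding K_def by (rule K_bound[OF T c0 dio[OF en_int k0]])
      then have "norm (cf (en n)) * norm (K (en n)) / T \<le> norm (cf (en n)) * (norm (en n :: real^'d) powr (2 * \<tau>) / (c^2 * T)) / T"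
        using T by (intro divide_right_mono mult_left_mono) auto
      moreover have "norm (v n) = norm (cf (en n)) * norm (K (en n)) / T"
        using False T by (simp add: v_def norm_mult norm_divide)
      ultimately have "norm (v n) \<le> norm (cf (en n)) * (norm (en n :: real^'d) powr (2 * \<tau>) / (c^2 * T)) / T"
        by simp
      also have "\<dots> = u n / (c^2 * T^2)" using k0 by (simp add: u_def wt_def power2_eq_square)
      finally show ?thesis .
    qed
    have "norm (J / of_real T - cf 0) \<le> (\<Sum>n. u n / (c^2 * T^2))"
      using norm_suminf_le[OF vb summable_divide[OF su]] sums_unique[OF sv] by simp
    also have "\<dots> = S / (c^2 * T^2)" by (simp add: S_def suminf_divide[OF su])
    also have "\<dots> \<le> (S / c^2 + 1) * T powr (-2)"
      using T c0 S0 by (simp add: powr_minus field_simps)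
    finally have main: "norm (J / of_real T - cf 0) \<le> (S / c^2 + 1) * T powr (-2)" .
    have ih: "(\<lambda>t. gw (t / T) * h (\<theta> + t *\<^sub>R \<omega>)) integrable_on {0..T}"
      by (intro integrable_continuous_interval continuous_intros continuous_on_compose2[OF ch cline]) (use T in auto)
    have J_eq: "J = of_real (integral {0..T} (\<lambda>t. gw (t / T) * h (\<theta> + t *\<^sub>R \<omega>)))"
      unfolding J_def using integral_of_real_c[OF ih] by simp
    have ihc: "h integrable_on cbox 0 One"
      by (rule integrable_continuous, rule continuous_on_subset[OF ch]) auto
    have cf0: "cf 0 = of_real (integral (cbox 0 One) h)"
      unfolding cf_def fco_def using integral_of_real_c[OF ihc] by simp
    have eqX: "complex_of_real ((1 / T) * integral {0..T} (\<lambda>t. gw (t / T) * h (\<theta> + t *\<^sub>R \<omega>)) - integral (cbox 0 One) h)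
        = J / of_real T - cf 0"
      by (simp add: J_eq cf0)
    have "\<bar>(1 / T) * integral {0..T} (\<lambda>t. gw (t / T) * h (\<theta> + t *\<^sub>R \<omega>)) - integral (cbox 0 One) h\<bar>
        = norm (J / of_real T - cf 0)"
      using arg_cong[OF eqX, of norm] by (simp only: norm_of_real)
    then show "\<bar>(1 / T) * integral {0..T} (\<lambda>t. gw (t / T) * h (\<theta> + t *\<^sub>R \<omega>)) - integral (cbox 0 One) h\<bar>
        \<le> (S / c^2 + 1) * T powr (-2)" using main by simp
  qed
qed


end
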